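(* Let $U=U_1\times\cdots\times U_m\subset\mathbb{R}^m_+$ (each $U_i\subseteq\mathbb{R}$) be convex, $C\subseteq\mathbb{R}^m$, $\overline{U}=U\cap C$. Let $f_1:\mathbb{R}^{n_1}\to\mathbb{R}$, $f_2:\mathbb{R}^{n_2}\to\mathbb{R}$ be convex with $f_1(0)=f_2(0)=0$, and for each $i\in[m]$ let $g_i:\mathbb{R}^{n_1}\times\mathbb{R}^{n_2}\to\mathbb{R}$ be concave in $(x,y)$ with $g_i(0,0)\ge0$. For a set $S$ define $$z^{\rm ad}(S)=\inf_{x,\ y:S\to\mathbb{R}^{n_2}}\Big\{f_1(x)+\sup_{u\in S}f_2(y(u)):\ g_i(x,y(u))\ge u_i\ \forall u\in S,\ \forall i\Big\},$$ $$z^{\rm st}(S)=\inf_{x,y}\{f_1(x)+f_2(y):\ g_i(x,y)\ge u_i\ \forall u\in S,\ \forall i\},$$ and $z_{\rm aro}=z^{\rm ad}(U)$, $z_{\rm acp}=z^{\rm ad}(\overline{U})$, $z_{\rm ro}=z^{\rm st}(U)$, $z_{\rm cp}=z^{\rm st}(\overline{U})$. Let $\gamma_{\rm ro}=\gamma(U^\downarrow,\Pi(\overline{U}^\downarrow))$ and $\gamma_{\rm aro}=\gamma(U^\downarrow,\overline{U}^\downarrow)$. If $z_{\rm acp}>0$ and $z_{\rm ro}<\infty$, then $$\frac{z_{\rm cp}}{z_{\rm ro}}\le\gamma_{\rm ro},\qquad\frac{z_{\rm acp}}{z_{\rm aro}}\le\gamma_{\rm aro}.$$ Furthermore, the bounds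 are tight.
   Context: $[m]=\{1,\dots,m\}$. For $S\subseteq\mathbb{R}^m_+$, $S^\downarrow=\{t\in\mathbb{R}^m_+:\exists s\in S,\ t\le s\text{ componentwise}\}$. $\Pi_i(S)$ is the projection of $S$ onto coordinate $i$ and $\Pi(S)=\Pi_1(S)\times\cdots\times\Pi_m(S)$. For $r\ge0$, $rS=\{rx:x\in S\}$; $\gamma(S_1,S_2)=\min\{\gamma\ge0:S_2\subseteq\gamma S_1\}$. *)

theory Defs
  imports "HOL-Analysis.Analysis"
begin

definition down_closure :: "(real^'m) set \<Rightarrow> (real^'m) set" where
  "down_closure S = {t. (\<forall>i. 0 \<le> t $ i) \<and> (\<exists>s\<in>S. \<forall>i. t $ i \<le> s $ i)}"

definition proj_box :: "(real^'m) set \<Rightarrow> (real^'m) set" where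
  "proj_box S = {t. \<forall>i. t $ i \<in> (\<lambda>s. s $ i) ` S}"

definition gamma_scale :: "(real^'m) set \<Rightarrow> (real^'m) set \<Rightarrow> real" where
  "gamma_scale S1 S2 = Inf {r::real. 0 \<le> r \<and> S2 \<subseteq> (\<lambda>x. r *\<^sub>R x) ` S1}"

text \<open>Adaptive value z^ad(S): first-stage x, second-stage policy y : S -> R^n2.
  The infimum of the empty set is +infinity.\<close>
definition z_ad :: "(real^'n1 \<Rightarrow> real) \<Rightarrow> (real^'n2 \<Rightarrow> real)
    \<Rightarrow> ('m \<Rightarrow> real^'n1 \<Rightarrow> real^'n2 \<Rightarrow> real) \<Rightarrow> (real^'m) set \<Rightarrow> ereal" where
  "z_ad f1 f2 g S = Inf {ereal (f1 x) + (SUP u\<in>S. ereal (f2 (y u))) | x y.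
       \<forall>u\<in>S. \<forall>i. g i x (y u) \<ge> u $ i}"

definition z_st :: "(real^'n1 \<Rightarrow> real) \<Rightarrow> (real^'n2 \<Rightarrow> real)
    \<Rightarrow> ('m \<Rightarrow> real^'n1 \<Rightarrow> real^'n2 \<Rightarrow> real) \<Rightarrow> (real^'m) set \<Rightarrow> ereal" where
  "z_st f1 f2 g S = Inf {ereal (f1 x + f2 y) | x y. \<forall>u\<in>S. \<forall>i. g i x y \<ge> u $ i}"

definition admissible_data :: "(real^'n1 \<Rightarrow> real) \<Rightarrow> (real^'n2 \<Rightarrow> real)
    \<Rightarrow> ('m \<Rightarrow> real^'n1 \<Rightarrow> real^'n2 \<Rightarrow> real) \<Rightarrow> bool" where
  "admissible_data f1 f2 g \<longleftrightarrow>
     convex_on UNIV f1 \<and> convex_on UNIV f2 \<and> f1 0 = 0 \<and> f2 0 = 0 \<and>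
     (\<forall>i. concave_on UNIV (\<lambda>(x, y). g i x y)) \<and> (\<forall>i. g i 0 0 \<ge> 0)"

end

theory Submission
  imports Defs
begin

lemma conv_scale:
  fixes f :: "'a::real_vector \<Rightarrow> real"
  assumes "convex_on UNIV f" "f 0 = 0" "0 \<le> r" "r \<le> 1"
  shows "f (r *\<^sub>R x) \<le> r * f x"
  using convex_onD[OF assms(1), of r 0 x] assms by simp

lemma conc_scale:
  fixes g :: "'a::real_vector \<Rightarrow> 'b::real_vector \<Rightarrow> real"
  assumes "concave_on UNIV (\<lambda>(x, y). g x y)" "g 0 0 \<ge> 0" "0 \<le> r" "r \<le> 1"
  shows "g (r *\<^sub>R x) (r *\<^sub>R y) \<ge> r * g x y"
proof -
  have "(1 - r) * g 0 0 + r * g x y \<le> g (r *\<^sub>R x) (r *\<^sub>R y)"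
    using concave_onD[OF assms(1), of r "(0,0)" "(x,y)"] assms by simp
  moreover have "(1 - r) * g 0 0 \<ge> 0" using assms by simp
  ultimately show ?thesis by linarith
qed

lemma st_mono: "S \<subseteq> T \<Longrightarrow> z_st f1 f2 g S \<le> z_st f1 f2 g T"
  unfolding z_st_def by (rule Inf_superset_mono) blast

lemma ad_mono: assumes "S \<subseteq> T" shows "z_ad f1 f2 g S \<le> z_ad f1 f2 g T"
  unfolding z_ad_def
proof (rule Inf_mono)
  fix b assume "b \<in> {ereal (f1 x) + (SUP u\<in>T. ereal (f2 (y u))) | x y. \<forall>u\<in>T. \<forall>i. g i x (y u) \<ge> u $ i}"
  then obtain x y where b: "b = ereal (f1 x) + (SUP u\<in>T. ereal (f2 (y u)))" and f: "\<forall>u\<in>T. \<forall>i. g i x (y u) \<ge> u $ i" by blast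
  have "ereal (f1 x) + (SUP u\<in>S. ereal (f2 (y u))) \<le> b"
    unfolding b by (intro add_left_mono SUP_subset_mono assms order.refl)
  moreover have "ereal (f1 x) + (SUP u\<in>S. ereal (f2 (y u))) \<in> {ereal (f1 x) + (SUP u\<in>S. ereal (f2 (y u))) | x y. \<forall>u\<in>S. \<forall>i. g i x (y u) \<ge> u $ i}"
    using f assms by blast
  ultimately show "\<exists>a\<in>{ereal (f1 x) + (SUP u\<in>S. ereal (f2 (y u))) | x y. \<forall>u\<in>S. \<forall>i. g i x (y u) \<ge> u $ i}. a \<le> b" by blast
qed

lemma ad_le_st: assumes "S \<noteq> {}" shows "z_ad f1 f2 g S \<le> z_st f1 f2 g S"
  unfolding z_ad_def z_st_def
proof (rule Inf_mono)
  fix b assume "b \<in> {ereal (f1 x + f2 y) | x y. \<forall>u\<in>S. \<forall>i. g i x y \<ge> u $ i}"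
  then obtain x y where b: "b = ereal (f1 x + f2 y)" and f: "\<forall>u\<in>S. \<forall>i. g i x y \<ge> u $ i" by blast
  have "ereal (f1 x) + (SUP u\<in>S. ereal (f2 ((\<lambda>_. y) u))) = b" using assms b by simp
  moreover have "ereal (f1 x) + (SUP u\<in>S. ereal (f2 ((\<lambda>_. y) u))) \<in> {ereal (f1 x) + (SUP u\<in>S. ereal (f2 (y u))) | x y. \<forall>u\<in>S. \<forall>i. g i x (y u) \<ge> u $ i}"
    by (rule CollectI, rule exI[of _ x], rule exI[of _ "\<lambda>_. y"]) (use f in simp)
  ultimately show "\<exists>a\<in>{ereal (f1 x) + (SUP u\<in>S. ereal (f2 (y u))) | x y. \<forall>u\<in>S. \<forall>i. g i x (y u) \<ge> u $ i}. a \<le> b" by auto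
qed

lemma pos_witness:
  assumes "admissible_data f1 f2 g" "z_ad f1 f2 g S > 0"
  shows "\<exists>u\<in>S. \<exists>i. u $ i > 0"
proof (rule ccontr)
  assume "\<not> ?thesis"
  hence h: "\<forall>u\<in>S. \<forall>i. g i 0 ((\<lambda>_. 0) u) \<ge> u $ i" using assms(1) unfolding admissible_data_def
    by (meson dual_order.trans not_le)
  have "z_ad f1 f2 g S \<le> ereal (f1 0) + (SUP u\<in>S. ereal (f2 ((\<lambda>_. 0) u)))"
    unfolding z_ad_def by (rule Inf_lower, rule CollectI, rule exI[of _ 0], rule exI[of _ "\<lambda>_. 0"]) (use h in simp)
  also have "\<dots> \<le> 0" using assms(1) unfolding admissible_data_def
    by (cases "S = {}") auto
  finally show False using assms(2) by simp
qed


lemma st_key: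
  assumes data: "admissible_data f1 f2 g" and r: "0 \<le> r" "r \<le> 1"
    and PB: "\<forall>u\<in>S. \<exists>s\<in>T. \<forall>i. u $ i \<le> r * s $ i"
    and feas: "\<forall>v\<in>T. \<forall>i. g i x y \<ge> v $ i"
  shows "z_st f1 f2 g S \<le> ereal (r * (f1 x + f2 y))"
proof -
  have c1: "convex_on UNIV f1" "f1 0 = 0" "convex_on UNIV f2" "f2 0 = 0"
    and c2: "\<And>i. concave_on UNIV (\<lambda>(x, y). g i x y)" "\<And>i. g i 0 0 \<ge> 0"
    using data unfolding admissible_data_def by auto
  have "\<forall>u\<in>S. \<forall>i. g i (r *\<^sub>R x) (r *\<^sub>R y) \<ge> u $ i"
  proof (intro ballI allI)
    fix u i assume "u \<in> S"
    then obtain s where s: "s \<in> T" "\<forall>i. u $ i \<le> r * s $ i" using PB by blast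
    have "r * s $ i \<le> r * g i x y" using feas s(1) r by (simp add: mult_left_mono)
    also have "\<dots> \<le> g i (r *\<^sub>R x) (r *\<^sub>R y)" by (rule conc_scale[OF c2 r])
    finally show "g i (r *\<^sub>R x) (r *\<^sub>R y) \<ge> u $ i" using s(2) by (meson order.trans)
  qed
  hence "z_st f1 f2 g S \<le> ereal (f1 (r *\<^sub>R x) + f2 (r *\<^sub>R y))"
    unfolding z_st_def by (intro Inf_lower) blast
  also have "\<dots> \<le> ereal (r * (f1 x + f2 y))"
    using conv_scale[OF c1(1,2) r, of x] conv_scale[OF c1(3,4) r, of y] by (simp add: algebra_simps)
  finally show ?thesis .
qed

lemma ad_key:
  assumes data: "admissible_data f1 f2 g" and r: "0 \<le> r" "r \<le> 1"
    and PB: "\<forall>u\<in>S. \<exists>s\<in>T. \<forall>i. u $ i \<le> r * s $ i"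
    and feas: "\<forall>v\<in>T. \<forall>i. g i x (y v) \<ge> v $ i"
    and q: "\<forall>v\<in>T. f2 (y v) \<le> q"
  shows "z_ad f1 f2 g S \<le> ereal (r * (f1 x + q))"
proof -
  have c1: "convex_on UNIV f1" "f1 0 = 0" "convex_on UNIV f2" "f2 0 = 0"
    and c2: "\<And>i. concave_on UNIV (\<lambda>(x, y). g i x y)" "\<And>i. g i 0 0 \<ge> 0"
    using data unfolding admissible_data_def by auto
  define sel where "sel u = (SOME s. s \<in> T \<and> (\<forall>i. u $ i \<le> r * s $ i))" for u
  have sel: "sel u \<in> T \<and> (\<forall>i. u $ i \<le> r * sel u $ i)" if "u \<in> S" for u
    unfolding sel_def by (rule someI_ex) (use PB that in blast)
  define y' where "y' u = r *\<^sub>R y (sel u)" for u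
  have "\<forall>u\<in>S. \<forall>i. g i (r *\<^sub>R x) (y' u) \<ge> u $ i"
  proof (intro ballI allI)
    fix u i assume "u \<in> S"
    note s = sel[OF this]
    have "r * sel u $ i \<le> r * g i x (y (sel u))" using feas s r by (simp add: mult_left_mono)
    also have "\<dots> \<le> g i (r *\<^sub>R x) (y' u)" unfolding y'_def by (rule conc_scale[OF c2 r])
    finally show "g i (r *\<^sub>R x) (y' u) \<ge> u $ i" using s by (meson order.trans)
  qed
  hence "z_ad f1 f2 g S \<le> ereal (f1 (r *\<^sub>R x)) + (SUP u\<in>S. ereal (f2 (y' u)))"
    unfolding z_ad_def by (intro Inf_lower) blast
  also have "\<dots> \<le> ereal (r * f1 x) + ereal (r * q)"
  proof (intro add_mono)
    show "ereal (f1 (r *\<^sub>R x)) \<le> ereal (r * f1 x)" using conv_scale[OF c1(1,2) r] by simp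
    show "(SUP u\<in>S. ereal (f2 (y' u))) \<le> ereal (r * q)"
    proof (rule SUP_least)
      fix u assume "u \<in> S"
      note s = sel[OF this]
      have "f2 (y' u) \<le> r * f2 (y (sel u))" unfolding y'_def by (rule conv_scale[OF c1(3,4) r])
      also have "\<dots> \<le> r * q" using q s r by (simp add: mult_left_mono)
      finally show "ereal (f2 (y' u)) \<le> ereal (r * q)" by simp
    qed
  qed
  also have "\<dots> = ereal (r * (f1 x + q))" by (simp add: algebra_simps)
  finally show ?thesis .
qed


lemma proj_sub_down:
  assumes U_prod: "\<exists>Us :: 'm \<Rightarrow> real set. U = {u. \<forall>i. u $ i \<in> Us i}"
  shows "proj_box (down_closure (U \<inter> C)) \<subseteq> down_closure (U :: (real^'m) set)"
proof
  fix t assume "t \<in> proj_box (down_closure (U \<inter> C))"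
  hence "\<forall>i. \<exists>w. w \<in> down_closure (U \<inter> C) \<and> t $ i = w $ i" unfolding proj_box_def by auto
  have "\<exists>s. s \<in> U \<and> 0 \<le> t $ i \<and> t $ i \<le> s $ i" for i
  proof -
    obtain w where w: "w \<in> down_closure (U \<inter> C)" "t $ i = w $ i" using \<open>\<forall>i. \<exists>w. _\<close> by blast
    then obtain s where "s \<in> U \<inter> C" "\<forall>j. w $ j \<le> s $ j" "\<forall>j. 0 \<le> w $ j"
      unfolding down_closure_def by auto
    thus ?thesis using w(2) by auto
  qed
  then obtain s where s: "\<And>i. s i \<in> U \<and> 0 \<le> t $ i \<and> t $ i \<le> s i $ i" by metis
  obtain Us where Us: "U = {u. \<forall>i. u $ i \<in> Us i}" using U_prod by blast
  have "(\<chi> i. s i $ i) \<in> U" using s unfolding Us by auto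
  thus "t \<in> down_closure U" unfolding down_closure_def using s
    by (intro CollectI conjI) (auto intro!: bexI[of _ "(\<chi> i. s i $ i)"])
qed

lemma down_sub_proj: "down_closure S \<subseteq> proj_box (down_closure S)"
  unfolding proj_box_def by auto

lemma upper:
  fixes U C :: "(real^'m) set"
    and f1 :: "real^'n1 \<Rightarrow> real" and f2 :: "real^'n2 \<Rightarrow> real"
    and g :: "'m \<Rightarrow> real^'n1 \<Rightarrow> real^'n2 \<Rightarrow> real"
  assumes U_prod: "\<exists>Us :: 'm \<Rightarrow> real set. U = {u. \<forall>i. u $ i \<in> Us i}"
    and U_nonneg: "\<forall>u\<in>U. \<forall>i. 0 \<le> u $ i"
    and data: "admissible_data f1 f2 g"
    and acp_pos: "z_ad f1 f2 g (U \<inter> C) > 0"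
    and ro_fin: "z_st f1 f2 g U < \<infinity>"
  shows "z_st f1 f2 g (U \<inter> C) / z_st f1 f2 g U
            \<le> ereal (gamma_scale (down_closure U) (proj_box (down_closure (U \<inter> C))))"
    "z_ad f1 f2 g (U \<inter> C) / z_ad f1 f2 g U
            \<le> ereal (gamma_scale (down_closure U) (down_closure (U \<inter> C)))"
proof -
  obtain u0 i0 where u0: "u0 \<in> U \<inter> C" "u0 $ i0 > 0" using pos_witness[OF data acp_pos] by blast
  have UCne: "U \<inter> C \<noteq> {}" "U \<noteq> {}" using u0 by auto
  have m1: "z_ad f1 f2 g (U \<inter> C) \<le> z_ad f1 f2 g U" by (rule ad_mono) auto
  have m2: "z_ad f1 f2 g U \<le> z_st f1 f2 g U" by (rule ad_le_st[OF UCne(2)])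
  have m3: "z_ad f1 f2 g (U \<inter> C) \<le> z_st f1 f2 g (U \<inter> C)" by (rule ad_le_st[OF UCne(1)])
  have m4: "z_st f1 f2 g (U \<inter> C) \<le> z_st f1 f2 g U" by (rule st_mono) auto
  have pos: "z_st f1 f2 g (U \<inter> C) > 0" "z_st f1 f2 g U > 0" "z_ad f1 f2 g U > 0"
    using acp_pos m1 m2 m3 m4 by (meson order_less_le_trans)+
  have fin: "z_st f1 f2 g (U \<inter> C) < \<infinity>" "z_ad f1 f2 g U < \<infinity>" "z_ad f1 f2 g (U \<inter> C) < \<infinity>"
    using ro_fin m1 m2 m3 m4 by (meson order_le_less_trans)+
  obtain sa where sa0: "z_st f1 f2 g (U \<inter> C) = ereal sa"
    using pos fin by (cases "z_st f1 f2 g (U \<inter> C)") auto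
  obtain sb where sb0: "z_st f1 f2 g U = ereal sb"
    using pos ro_fin by (cases "z_st f1 f2 g U") auto
  obtain aa where aa0: "z_ad f1 f2 g (U \<inter> C) = ereal aa"
    using acp_pos fin by (cases "z_ad f1 f2 g (U \<inter> C)") auto
  obtain ab where ab0: "z_ad f1 f2 g U = ereal ab"
    using pos fin by (cases "z_ad f1 f2 g U") auto
  have sa: "z_st f1 f2 g (U \<inter> C) = ereal sa" "sa > 0" using sa0 pos by auto
  have sb: "z_st f1 f2 g U = ereal sb" "sb > 0" using sb0 pos by auto
  have aa: "z_ad f1 f2 g (U \<inter> C) = ereal aa" "aa > 0" using aa0 acp_pos by auto
  have ab: "z_ad f1 f2 g U = ereal ab" "ab > 0" using ab0 pos by auto
  define R where "R = {r::real. 0 \<le> r \<and> down_closure (U \<inter> C) \<subseteq> (\<lambda>x. r *\<^sub>R x) ` down_closure U}"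
  define Rp where "Rp = {r::real. 0 \<le> r \<and> proj_box (down_closure (U \<inter> C)) \<subseteq> (\<lambda>x. r *\<^sub>R x) ` down_closure U}"
  have RpR: "Rp \<subseteq> R" unfolding R_def Rp_def using down_sub_proj by blast
  have oneRp: "1 \<in> Rp" unfolding Rp_def using proj_sub_down[OF U_prod] by simp
  have PB: "(\<forall>u\<in>U \<inter> C. \<exists>s\<in>U. \<forall>i. u $ i \<le> r * s $ i) \<and> r > 0" if "r \<in> R" for r
  proof -
    have r0: "r \<ge> 0" and sub: "down_closure (U \<inter> C) \<subseteq> (\<lambda>x. r *\<^sub>R x) ` down_closure U"
      using that unfolding R_def by auto
    have ex: "\<exists>w s. s \<in> U \<and> (\<forall>i. w $ i \<le> s $ i) \<and> u = r *\<^sub>R w" if "u \<in> U \<inter> C" for u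
    proof -
      have "u \<in> down_closure (U \<inter> C)" using that U_nonneg unfolding down_closure_def by auto
      with sub obtain w where "w \<in> down_closure U" "u = r *\<^sub>R w" by auto
      thus ?thesis unfolding down_closure_def by auto
    qed
    have "\<forall>u\<in>U \<inter> C. \<exists>s\<in>U. \<forall>i. u $ i \<le> r * s $ i"
    proof
      fix u assume "u \<in> U \<inter> C"
      then obtain w s where "s \<in> U" "\<forall>i. w $ i \<le> s $ i" "u = r *\<^sub>R w" using ex by blast
      thus "\<exists>s\<in>U. \<forall>i. u $ i \<le> r * s $ i" using r0 by (auto intro!: bexI[of _ s] mult_left_mono)
    qed
    moreover have "r \<noteq> 0"
    proof
      assume "r = 0"
      with ex[OF u0(1)] have "u0 = 0" by auto
      with u0(2) show False by simp
    qed
    ultimately show ?thesis using r0 by auto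
  qed
  have st_r: "sa \<le> r * sb" if "r \<in> R" for r
  proof (cases "r \<ge> 1")
    case True
    have "sa \<le> sb" using m4 sa sb by simp
    also have "\<dots> \<le> r * sb" using True sb(2) by simp
    finally show ?thesis .
  next
    case False
    note P = PB[OF that]
    have "ereal (sa / r) \<le> z_st f1 f2 g U"
      unfolding z_st_def
    proof (rule Inf_greatest)
      fix e assume "e \<in> {ereal (f1 x + f2 y) | x y. \<forall>u\<in>U. \<forall>i. g i x y \<ge> u $ i}"
      then obtain x y where e: "e = ereal (f1 x + f2 y)" and f: "\<forall>u\<in>U. \<forall>i. g i x y \<ge> u $ i" by blast
      have "ereal sa \<le> ereal (r * (f1 x + f2 y))"
        using st_key[OF data _ _ _ f, of r "U \<inter> C"] P False sa by simp
      thus "ereal (sa / r) \<le> e" using e P by (simp add: divide_le_eq mult.commute)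
    qed
    thus ?thesis using sb P by (simp add: divide_le_eq mult.commute)
  qed
  have ad_r: "aa \<le> r * ab" if "r \<in> R" for r
  proof (cases "r \<ge> 1")
    case True
    have "aa \<le> ab" using m1 aa ab by simp
    also have "\<dots> \<le> r * ab" using True ab(2) by simp
    finally show ?thesis .
  next
    case False
    note P = PB[OF that]
    have "ereal (aa / r) \<le> z_ad f1 f2 g U"
      unfolding z_ad_def
    proof (rule Inf_greatest)
      fix e assume "e \<in> {ereal (f1 x) + (SUP u\<in>U. ereal (f2 (y u))) | x y. \<forall>u\<in>U. \<forall>i. g i x (y u) \<ge> u $ i}"
      then obtain x y where e: "e = ereal (f1 x) + (SUP u\<in>U. ereal (f2 (y u)))"
        and f: "\<forall>u\<in>U. \<forall>i. g i x (y u) \<ge> u $ i" by blast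
      show "ereal (aa / r) \<le> e"
      proof (cases "(SUP u\<in>U. ereal (f2 (y u)))")
        case (real q)
        have "\<forall>v\<in>U. f2 (y v) \<le> q"
        proof
          fix v assume "v \<in> U"
          hence "ereal (f2 (y v)) \<le> (SUP u\<in>U. ereal (f2 (y u)))" by (rule SUP_upper)
          thus "f2 (y v) \<le> q" using real by simp
        qed
        from ad_key[OF data _ _ _ f this, of r "U \<inter> C"] P False aa
        have "aa \<le> r * (f1 x + q)" by simp
        thus ?thesis using e real P by (simp add: divide_le_eq mult.commute)
      next
        case PInf
        thus ?thesis using e by simp
      next
        case MInf
        have "ereal (f2 (y u0)) \<le> (SUP u\<in>U. ereal (f2 (y u)))" using u0 by (intro SUP_upper) auto
        thus ?thesis using MInf by simp
      qed
    qed
    thus ?thesis using ab P by (simp add: divide_le_eq mult.commute)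
  qed
  have "sa / sb \<le> Inf Rp"
    by (rule cInf_greatest) (use oneRp RpR st_r sb in \<open>auto simp: divide_le_eq\<close>)
  thus "z_st f1 f2 g (U \<inter> C) / z_st f1 f2 g U
            \<le> ereal (gamma_scale (down_closure U) (proj_box (down_closure (U \<inter> C))))"
    using sa sb unfolding gamma_scale_def Rp_def by simp
  have "aa / ab \<le> Inf R"
    by (rule cInf_greatest) (use oneRp RpR ad_r ab in \<open>auto simp: divide_le_eq\<close>)
  thus "z_ad f1 f2 g (U \<inter> C) / z_ad f1 f2 g U
            \<le> ereal (gamma_scale (down_closure U) (down_closure (U \<inter> C)))"
    using aa ab unfolding gamma_scale_def R_def by simp
qed


lemma tight_final:
  fixes A B :: ereal
  assumes "A / B \<le> ereal c" "ereal c \<le> A" "0 < A" "0 < B" "B \<le> 1"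
  shows "A / B = ereal c"
proof -
  obtain b where b: "B = ereal b" "0 < b" "b \<le> 1" using assms(4,5) by (cases B) auto
  obtain a where a: "A = ereal a" "0 < a" using assms(1,3) b by (cases A) auto
  have "a \<le> a / b" using a b by (simp add: le_divide_eq mult_left_le)
  thus ?thesis using assms(1,2) a b by (simp add: antisym)
qed


lemma gam_le:
  fixes U C :: "(real^'m) set" and B :: "'m \<Rightarrow> real"
  assumes U_prod: "\<exists>Us :: 'm \<Rightarrow> real set. U = {u. \<forall>i. u $ i \<in> Us i}"
    and U_nonneg: "\<forall>u\<in>U. \<forall>i. 0 \<le> u $ i"
    and bdd: "\<And>i. bdd_above ((\<lambda>u. u $ i) ` U)"
    and B: "\<And>i. B i = Sup ((\<lambda>u. u $ i) ` U)"
    and u0: "u0 \<in> U \<inter> C" "u0 $ i0 > 0"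
    and m: "\<forall>u\<in>U \<inter> C. \<forall>i. u $ i \<le> B i * m"
  shows "gamma_scale (down_closure U) (proj_box (down_closure (U \<inter> C))) \<le> m"
    "gamma_scale (down_closure U) (down_closure (U \<inter> C)) \<le> m"
proof -
  have Une: "U \<noteq> {}" using u0 by auto
  have Bge: "u $ i \<le> B i" if "u \<in> U" for u i
    unfolding B by (rule cSup_upper) (use that bdd in auto)
  have B0: "B i \<ge> 0" for i using Une Bge U_nonneg by (meson equals0I order.trans)
  have "B i0 > 0" using Bge[of u0 i0] u0 by auto
  moreover have "B i0 * m > 0" using m u0 by (meson IntD1 order_less_le_trans)
  ultimately have mpos: "m > 0" by (simp add: zero_less_mult_iff)
  define Rp where "Rp = {r::real. 0 \<le> r \<and> proj_box (down_closure (U \<inter> C)) \<subseteq> (\<lambda>x. r *\<^sub>R x) ` down_closure U}"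
  define R where "R = {r::real. 0 \<le> r \<and> down_closure (U \<inter> C) \<subseteq> (\<lambda>x. r *\<^sub>R x) ` down_closure U}"
  obtain Us where Us: "U = {u. \<forall>i. u $ i \<in> Us i}" using U_prod by blast
  have inRp: "m + e \<in> Rp" if e: "e > 0" for e
  proof -
    define r where "r = m + e"
    have r: "r > 0" "m < r" using mpos e unfolding r_def by auto
    have "proj_box (down_closure (U \<inter> C)) \<subseteq> (\<lambda>x. r *\<^sub>R x) ` down_closure U"
    proof
      fix t assume t: "t \<in> proj_box (down_closure (U \<inter> C))"
      have ti: "0 \<le> t $ i \<and> t $ i \<le> B i * m" for i
      proof -
        obtain w where w: "w \<in> down_closure (U \<inter> C)" "t $ i = w $ i" using t unfolding proj_box_def by blast
        then obtain s where "s \<in> U \<inter> C" "\<forall>j. w $ j \<le> s $ j" "\<forall>j. 0 \<le> w $ j"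
          unfolding down_closure_def by auto
        thus ?thesis using w(2) m by (metis order.trans)
      qed
      have "\<exists>v. v \<in> U \<and> t $ i / r \<le> v $ i" for i
      proof (cases "B i = 0")
        case True
        hence "t $ i = 0" using ti[of i] by simp
        thus ?thesis using Une U_nonneg by auto
      next
        case False
        hence Bp: "B i > 0" using B0[of i] by simp
        have "t $ i / r \<le> B i * m / r" using ti[of i] r by (simp add: divide_right_mono)
        also have "\<dots> < B i" using Bp r by (simp add: divide_less_eq)
        finally have "t $ i / r < Sup ((\<lambda>u. u $ i) ` U)" using B by simp
        then obtain v where "v \<in> U" "t $ i / r < v $ i"
          using less_cSup_iff[of "(\<lambda>u. u $ i) ` U"] bdd Une by auto
        thus ?thesis by (auto intro: less_imp_le)
      qed
      then obtain v where v: "\<And>i. v i \<in> U \<and> t $ i / r \<le> v i $ i" by metis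
      have sU: "(\<chi> i. v i $ i) \<in> U" using v unfolding Us by auto
      have "(1 / r) *\<^sub>R t \<in> down_closure U"
        unfolding down_closure_def using ti r v sU
        by (intro CollectI conjI) (auto intro!: bexI[of _ "(\<chi> i. v i $ i)"] simp: divide_inverse mult.commute)
      moreover have "t = r *\<^sub>R ((1 / r) *\<^sub>R t)" using r by simp
      ultimately show "t \<in> (\<lambda>x. r *\<^sub>R x) ` down_closure U" by blast
    qed
    thus ?thesis unfolding Rp_def r_def[symmetric] using r by auto
  qed
  have RpR: "Rp \<subseteq> R" unfolding R_def Rp_def using down_sub_proj by blast
  have bR: "bdd_below R" unfolding R_def by (rule bdd_belowI[of _ 0]) auto
  have bRp: "bdd_below Rp" unfolding Rp_def by (rule bdd_belowI[of _ 0]) auto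
  have "Inf Rp \<le> m"
  proof (rule field_le_epsilon)
    fix e :: real assume "e > 0"
    thus "Inf Rp \<le> m + e" using inRp bRp by (intro cInf_lower) auto
  qed
  moreover have "Inf R \<le> Inf Rp"
    using inRp[of 1] RpR bR by (intro cInf_superset_mono) auto
  ultimately show "gamma_scale (down_closure U) (proj_box (down_closure (U \<inter> C))) \<le> m"
    "gamma_scale (down_closure U) (down_closure (U \<inter> C)) \<le> m"
    unfolding gamma_scale_def Rp_def[symmetric] R_def[symmetric] by auto
qed


lemma lin_conv: "convex_on UNIV (\<lambda>y::real^'n. y $ k)"
  by (rule convex_onI) (simp_all add: algebra_simps)
lemma lin_conc: "concave_on UNIV (\<lambda>(x::real^'a, y::real^'n). b * y $ k)"
  unfolding concave_on_iff
proof (intro conjI ballI allI impI)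
  fix p q :: "(real^'a) \<times> (real^'n)" and u v :: real
  assume "u + v = 1"
  show "u * (case p of (x, y) \<Rightarrow> b * y $ k) + v * (case q of (x, y) \<Rightarrow> b * y $ k)
        \<le> (case u *\<^sub>R p + v *\<^sub>R q of (x, y) \<Rightarrow> b * y $ k)"
    by (cases p, cases q) (simp add: algebra_simps)
qed simp

lemma adm_lin: "admissible_data (\<lambda>_::real^'n1. 0::real) (\<lambda>y::real^'n2. y $ k0) (\<lambda>i x y. (B::'m\<Rightarrow>real) i * y $ k0)"
    unfolding admissible_data_def 
  proof (intro conjI allI)
    show "convex_on UNIV (\<lambda>_::real^'n1. 0::real)" by (simp add: convex_on_const)
    show "convex_on UNIV (\<lambda>y::real^'n2. y $ k0)" by (rule lin_conv)
    show "concave_on UNIV (\<lambda>(x::real^'n1, y::real^'n2). B i * y $ k0)" for i by (rule lin_conc)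
  qed simp_all

theorem theorem9:
  fixes U C :: "(real^'m) set"
    and f1 :: "real^'n1 \<Rightarrow> real" and f2 :: "real^'n2 \<Rightarrow> real"
    and g :: "'m \<Rightarrow> real^'n1 \<Rightarrow> real^'n2 \<Rightarrow> real"
  assumes U_prod: "\<exists>Us :: 'm \<Rightarrow> real set. U = {u. \<forall>i. u $ i \<in> Us i}"
    and U_nonneg: "\<forall>u\<in>U. \<forall>i. 0 \<le> u $ i"
    and U_convex: "convex U"
    and data: "admissible_data f1 f2 g"
    and acp_pos: "z_ad f1 f2 g (U \<inter> C) > 0"
    and ro_fin: "z_st f1 f2 g U < \<infinity>"
  shows "z_st f1 f2 g (U \<inter> C) / z_st f1 f2 g U
            \<le> ereal (gamma_scale (down_closure U) (proj_box (down_closure (U \<inter> C))))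
       \<and> z_ad f1 f2 g (U \<inter> C) / z_ad f1 f2 g U
            \<le> ereal (gamma_scale (down_closure U) (down_closure (U \<inter> C)))
       \<and> (\<exists>(f1' :: real^'n1 \<Rightarrow> real) (f2' :: real^'n2 \<Rightarrow> real) g'.
            admissible_data f1' f2' g' \<and> z_ad f1' f2' g' (U \<inter> C) > 0 \<and> z_st f1' f2' g' U < \<infinity> \<and>
            z_st f1' f2' g' (U \<inter> C) / z_st f1' f2' g' U
              = ereal (gamma_scale (down_closure U) (proj_box (down_closure (U \<inter> C)))))
       \<and> (\<exists>(f1' :: real^'n1 \<Rightarrow> real) (f2' :: real^'n2 \<Rightarrow> real) g'.
            admissible_data f1' f2' g' \<and> z_ad f1' f2' g' (U \<inter> C) > 0 \<and> z_st f1' f2' g' U < \<infinity> \<and>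
            z_ad f1' f2' g' (U \<inter> C) / z_ad f1' f2' g' U
              = ereal (gamma_scale (down_closure U) (down_closure (U \<inter> C))))"
proof -
  note up = upper[OF U_prod U_nonneg data acp_pos ro_fin]
  obtain u0 i0 where u0: "u0 \<in> U \<inter> C" "u0 $ i0 > 0" using pos_witness[OF data acp_pos] by blast
  have "{ereal (f1 x + f2 y) | x y. \<forall>u\<in>U. \<forall>i. g i x y \<ge> u $ i} \<noteq> {}"
    using ro_fin unfolding z_st_def by (metis Inf_empty less_irrefl top_ereal_def)
  then obtain x0 y0 where feas0: "\<forall>u\<in>U. \<forall>i. g i x0 y0 \<ge> u $ i" by blast
  have bdd: "bdd_above ((\<lambda>u. u $ i) ` U)" for i
    using feas0 by (intro bdd_aboveI[of _ "g i x0 y0"]) auto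
  define B where "B i = Sup ((\<lambda>u. u $ i) ` U)" for i
  have Bge: "u $ i \<le> B i" if "u \<in> U" for u i
    unfolding B_def by (rule cSup_upper) (use that bdd in auto)
  have B0: "B i \<ge> 0" for i using u0 Bge U_nonneg by (meson IntD1 order.trans)
  have Bi0: "B i0 > 0" using Bge[of u0 i0] u0 by auto
  define k0 :: 'n2 where "k0 = undefined"
  define F1 :: "real^'n1 \<Rightarrow> real" where "F1 = (\<lambda>_. 0)"
  define F2 :: "real^'n2 \<Rightarrow> real" where "F2 = (\<lambda>y. y $ k0)"
  define G :: "'m \<Rightarrow> real^'n1 \<Rightarrow> real^'n2 \<Rightarrow> real" where "G = (\<lambda>i x y. B i * y $ k0)"
  note gl = gam_le[OF U_prod U_nonneg bdd B_def u0]
  have adm: "admissible_data F1 F2 G"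
    unfolding F1_def F2_def G_def by (rule adm_lin)
  have st1: "z_st F1 F2 G U \<le> 1"
  proof -
    have "\<forall>u\<in>U. \<forall>i. G i 0 (\<chi> j. 1) \<ge> u $ i" unfolding G_def using Bge by simp
    hence "z_st F1 F2 G U \<le> ereal (F1 0 + F2 (\<chi> j. 1))"
      unfolding z_st_def by (intro Inf_lower) blast
    also have "ereal (F1 0 + F2 (\<chi> j. 1)) = ereal 1" unfolding F1_def F2_def by simp
    also have "ereal 1 = 1" by (rule one_ereal_def[symmetric])
    finally show ?thesis .
  qed
  have adpos: "z_ad F1 F2 G (U \<inter> C) > 0"
  proof -
    have "ereal (u0 $ i0 / B i0) \<le> z_ad F1 F2 G (U \<inter> C)"
      unfolding z_ad_def
    proof (rule Inf_greatest)
      fix e assume "e \<in> {ereal (F1 x) + (SUP u\<in>U \<inter> C. ereal (F2 (y u))) | x y. \<forall>u\<in>U \<inter> C. \<forall>i. G i x (y u) \<ge> u $ i}"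
      then obtain x y where e: "e = ereal (F1 x) + (SUP u\<in>U \<inter> C. ereal (F2 (y u)))"
        and f: "\<forall>u\<in>U \<inter> C. \<forall>i. G i x (y u) \<ge> u $ i" by blast
      have "u0 $ i0 \<le> B i0 * y u0 $ k0" using f u0 unfolding G_def by auto
      hence "u0 $ i0 / B i0 \<le> F2 (y u0)" using Bi0 unfolding F2_def by (simp add: divide_le_eq mult.commute)
      also have "ereal (F2 (y u0)) \<le> (SUP u\<in>U \<inter> C. ereal (F2 (y u)))" using u0 by (intro SUP_upper) auto
      finally show "ereal (u0 $ i0 / B i0) \<le> e" using e unfolding F1_def by simp
    qed
    moreover have "u0 $ i0 / B i0 > 0" using u0 Bi0 by simp
    ultimately show ?thesis by (meson ereal_less(2) order_less_le_trans)
  qed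
  have UCne: "U \<inter> C \<noteq> {}" "U \<noteq> {}" using u0 by auto
  have stfin: "z_st F1 F2 G U < \<infinity>" by (rule le_less_trans[OF st1]) simp
  have p1: "z_ad F1 F2 G U > 0"
    by (rule order_less_le_trans[OF adpos ad_mono]) auto
  have p2: "z_st F1 F2 G U > 0"
    by (rule order_less_le_trans[OF p1 ad_le_st[OF UCne(2)]])
  have p3: "z_st F1 F2 G (U \<inter> C) > 0"
    by (rule order_less_le_trans[OF adpos ad_le_st[OF UCne(1)]])
  note stpos = p2 p1 p3
  have adle1: "z_ad F1 F2 G U \<le> 1" by (rule order.trans[OF ad_le_st[OF UCne(2)] st1])
  note up2 = upper[OF U_prod U_nonneg adm adpos stfin]
  have lo_st: "ereal (gamma_scale (down_closure U) (proj_box (down_closure (U \<inter> C)))) \<le> z_st F1 F2 G (U \<inter> C)"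
    unfolding z_st_def
  proof (rule Inf_greatest)
    fix e assume "e \<in> {ereal (F1 x + F2 y) | x y. \<forall>u\<in>U \<inter> C. \<forall>i. G i x y \<ge> u $ i}"
    then obtain x y where e: "e = ereal (F1 x + F2 y)" and f: "\<forall>u\<in>U \<inter> C. \<forall>i. G i x y \<ge> u $ i" by blast
    have "gamma_scale (down_closure U) (proj_box (down_closure (U \<inter> C))) \<le> y $ k0"
      by (rule gl(1)) (use f in \<open>simp add: G_def\<close>)
    thus "ereal (gamma_scale (down_closure U) (proj_box (down_closure (U \<inter> C)))) \<le> e"
      using e unfolding F1_def F2_def by simp
  qed
  have lo_ad: "ereal (gamma_scale (down_closure U) (down_closure (U \<inter> C))) \<le> z_ad F1 F2 G (U \<inter> C)"
    unfolding z_ad_def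
  proof (rule Inf_greatest)
    fix e assume "e \<in> {ereal (F1 x) + (SUP u\<in>U \<inter> C. ereal (F2 (y u))) | x y. \<forall>u\<in>U \<inter> C. \<forall>i. G i x (y u) \<ge> u $ i}"
    then obtain x y where e: "e = ereal (F1 x) + (SUP u\<in>U \<inter> C. ereal (F2 (y u)))"
      and f: "\<forall>u\<in>U \<inter> C. \<forall>i. G i x (y u) \<ge> u $ i" by blast
    show "ereal (gamma_scale (down_closure U) (down_closure (U \<inter> C))) \<le> e"
    proof (cases "(SUP u\<in>U \<inter> C. ereal (F2 (y u)))")
      case (real q)
      have "\<forall>u\<in>U \<inter> C. \<forall>i. u $ i \<le> B i * q"
      proof (intro ballI allI)
        fix u i assume u: "u \<in> U \<inter> C"
        hence "ereal (F2 (y u)) \<le> (SUP u\<in>U \<inter> C. ereal (F2 (y u)))" by (rule SUP_upper)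
        hence "y u $ k0 \<le> q" using real unfolding F2_def by simp
        hence "B i * y u $ k0 \<le> B i * q" using B0 by (simp add: mult_left_mono)
        thus "u $ i \<le> B i * q" using f u unfolding G_def by (meson order.trans)
      qed
      from gl(2)[OF this] show ?thesis using e real unfolding F1_def by simp
    next
      case PInf
      thus ?thesis using e by simp
    next
      case MInf
      have "ereal (F2 (y u0)) \<le> (SUP u\<in>U \<inter> C. ereal (F2 (y u)))" using u0 by (intro SUP_upper) auto
      thus ?thesis using MInf by simp
    qed
  qed
  have T1: "z_st F1 F2 G (U \<inter> C) / z_st F1 F2 G U
              = ereal (gamma_scale (down_closure U) (proj_box (down_closure (U \<inter> C))))"
    by (rule tight_final[OF up2(1) lo_st stpos(3) stpos(1) st1])
  have T2: "z_ad F1 F2 G (U \<inter> C) / z_ad F1 F2 G U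
              = ereal (gamma_scale (down_closure U) (down_closure (U \<inter> C)))"
    by (rule tight_final[OF up2(2) lo_ad adpos stpos(2) adle1])
  show ?thesis
  proof (intro conjI)
    show "z_st f1 f2 g (U \<inter> C) / z_st f1 f2 g U
            \<le> ereal (gamma_scale (down_closure U) (proj_box (down_closure (U \<inter> C))))" by (rule up(1))
    show "z_ad f1 f2 g (U \<inter> C) / z_ad f1 f2 g U
            \<le> ereal (gamma_scale (down_closure U) (down_closure (U \<inter> C)))" by (rule up(2))
    show "\<exists>(f1' :: real^'n1 \<Rightarrow> real) (f2' :: real^'n2 \<Rightarrow> real) g'.
            admissible_data f1' f2' g' \<and> z_ad f1' f2' g' (U \<inter> C) > 0 \<and> z_st f1' f2' g' U < \<infinity> \<and>
            z_st f1' f2' g' (U \<inter> C) / z_st f1' f2' g' U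
              = ereal (gamma_scale (down_closure U) (proj_box (down_closure (U \<inter> C))))"
      by (rule exI[of _ F1], rule exI[of _ F2], rule exI[of _ G]) (intro conjI adm adpos stfin T1)
    show "\<exists>(f1' :: real^'n1 \<Rightarrow> real) (f2' :: real^'n2 \<Rightarrow> real) g'.
            admissible_data f1' f2' g' \<and> z_ad f1' f2' g' (U \<inter> C) > 0 \<and> z_st f1' f2' g' U < \<infinity> \<and>
            z_ad f1' f2' g' (U \<inter> C) / z_ad f1' f2' g' U
              = ereal (gamma_scale (down_closure U) (down_closure (U \<inter> C)))"
      by (rule exI[of _ F1], rule exI[of _ F2], rule exI[of _ G]) (intro conjI adm adpos stfin T2)
  qed
qed

end
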